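(* Let $m,n\in\mathbb{N}$ with $m\le n$. There exists $f_{n,m}\in\mathcal{NN}_{1,m+1}(2^{m+2}+1,1)$ such that for every $x=\sum_{i=1}^n2^{-i}x_i$ with $x_1,\dots,x_n\in\{0,1\}$, \[ f_{n,m}(x)=\Big(x_1,\dots,x_m,\ \sum_{i=m+1}^n 2^{m-i}x_i\Big)^\top. \] Moreover, for every $L\in\mathbb{N}$ there exists $f_{n,m,L}\in\mathcal{NN}_{1,2}(2^{\lceil m/L\rceil+2}+2,L)$ such that for every such $x$, \[ f_{n,m,L}(x)=\Big(\sum_{i=1}^m2^{m-i}x_i,\ \sum_{i=m+1}^n 2^{m-i}x_i\Big)^\top. \]
   Context: $\mathcal{NN}_{d,k}(W,L)$: set of maps $g:\mathbb{R}^d\to\mathbb{R}^k$ given by $g_0(x)=x$, $g_{\ell+1}(x)=\sigma(A_\ell g_\ell(x)+b_\ell)$ ($\ell=0,\dots,L-1$), $g(x)=A_Lg_L(x)+b_L$, with $A_\ell\in\mathbb{R}^{N_{\ell+1}\times N_\ell}$, $b_\ell\in\mathbb{R}^{N_{\ell+1}}$, $N_0=d$, $N_{L+1}=k$, $\max\{N_1,\dots,N_L\}\le W$, $\sigma(t)=\max\{t,0\}$ componentwise. In binary notation, the first output of $f_{n,m,L}$ is $\mathrm{Bin}\,x_1\cdots x_m.0$ and the last outputs are $\mathrm{Bin}\,0.x_{m+1}\cdots x_n$. *)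

theory Defs
  imports Complex_Main
begin

text \<open>Vectors in R^N are real lists of length N; a matrix in R^(N' x N) is a list of
N' rows, each a real list of length N. A layer is a pair (A, b).\<close>

definition relu_vec :: "real list \<Rightarrow> real list" where
  "relu_vec v = map (\<lambda>t. max t 0) v"

definition affine :: "real list list \<Rightarrow> real list \<Rightarrow> real list \<Rightarrow> real list" where
  "affine A b x = map (\<lambda>i. (\<Sum>j<length x. (A ! i) ! j * x ! j) + b ! i) [0..<length b]"

definition is_matrix :: "nat \<Rightarrow> nat \<Rightarrow> real list list \<Rightarrow> bool" where
  "is_matrix r c A \<longleftrightarrow> length A = r \<and> (\<forall>row \<in> set A. length row = c)"

fun realize :: "(real list list \<times> real list) list \<Rightarrow> real list \<Rightarrow> real list" where
  "realize [] x = x"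
| "realize [(A, b)] x = affine A b x"
| "realize ((A, b) # rest) x = realize rest (relu_vec (affine A b x))"

definition wf_net :: "nat \<Rightarrow> nat \<Rightarrow> nat \<Rightarrow> nat \<Rightarrow> nat list \<Rightarrow> (real list list \<times> real list) list \<Rightarrow> bool" where
  "wf_net d k W L Ns layers \<longleftrightarrow>
     length Ns = L + 2 \<and> length layers = L + 1 \<and> Ns ! 0 = d \<and> Ns ! (L + 1) = k \<and>
     (\<forall>l \<le> L. is_matrix (Ns ! (l + 1)) (Ns ! l) (fst (layers ! l)) \<and>
               length (snd (layers ! l)) = Ns ! (l + 1)) \<and>
     (\<forall>l \<in> {1..L}. Ns ! l \<le> W)"

definition NN :: "nat \<Rightarrow> nat \<Rightarrow> nat \<Rightarrow> nat \<Rightarrow> (real list \<Rightarrow> real list) set" where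
  "NN d k W L = {realize layers | layers. \<exists>Ns. wf_net d k W L Ns layers}"

end

theory Submission
  imports Defs
begin


definition Pv :: "(nat \<Rightarrow> real) \<Rightarrow> nat \<Rightarrow> real" where
  "Pv x e = (\<Sum>i = 1..e. 2 powi (int e - int i) * x i)"
definition Rv :: "(nat \<Rightarrow> real) \<Rightarrow> nat \<Rightarrow> nat \<Rightarrow> real" where
  "Rv x n e = (\<Sum>i = e + 1..n. 2 powi (int e - int i) * x i)"

lemma Pv_0[simp]: "Pv x 0 = 0" by (simp add: Pv_def)

lemma Pv_Suc: "Pv x (Suc e) = 2 * Pv x e + x (Suc e)"
proof -
  have "Pv x (Suc e) = (\<Sum>i = 1..e. 2 powi (int (Suc e) - int i) * x i) + x (Suc e)"
    by (simp add: Pv_def)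
  also have "(\<Sum>i = 1..e. 2 powi (int (Suc e) - int i) * x i) = (\<Sum>i = 1..e. 2 * (2 powi (int e - int i) * x i))"
  proof (rule sum.cong)
    fix i assume "i \<in> {1..e}"
    have h: "int (Suc e) - int i = (int e - int i) + 1" by simp
    have "(2::real) powi (int (Suc e) - int i) = 2 powi (int e - int i) * 2"
      by (metis h power_int_add_1 zero_neq_numeral)
    then show "2 powi (int (Suc e) - int i) * x i = 2 * (2 powi (int e - int i) * x i)" by simp
  qed simp
  finally show ?thesis by (simp add: Pv_def sum_distrib_left)
qed

lemma Rv_n[simp]: "Rv x n n = 0" by (simp add: Rv_def)

lemma Rv_Suc: assumes "e < n" shows "Rv x n e = (x (Suc e) + Rv x n (Suc e)) / 2"
proof -
  have "Rv x n e = 2 powi (int e - int (Suc e)) * x (Suc e) + (\<Sum>i = Suc (Suc e)..n. 2 powi (int e - int i) * x i)"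
    unfolding Rv_def using assms by (simp add: sum.atLeast_Suc_atMost)
  also have "(\<Sum>i = Suc (Suc e)..n. 2 powi (int e - int i) * x i) = (\<Sum>i = Suc (Suc e)..n. (2 powi (int (Suc e) - int i) * x i) / 2)"
  proof (rule sum.cong)
    fix i assume "i \<in> {Suc (Suc e)..n}"
    have h: "int e - int i = (int (Suc e) - int i) - 1" by simp
    have "(2::real) powi (int e - int i) = 2 powi (int (Suc e) - int i) / 2 powi 1"
      by (metis h power_int_diff zero_neq_numeral)
    then have "(2::real) powi (int e - int i) = 2 powi (int (Suc e) - int i) / 2" by simp
    then show "2 powi (int e - int i) * x i = (2 powi (int (Suc e) - int i) * x i) / 2" by simp
  qed simp
  also have "\<dots> = (\<Sum>i = Suc (Suc e)..n. 2 powi (int (Suc e) - int i) * x i) / 2"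
    by (simp add: sum_divide_distrib)
  also have "\<dots> = Rv x n (Suc e) / 2" by (simp add: Rv_def)
  also have "(2::real) powi (int e - int (Suc e)) = 1 / 2" by (simp add: power_int_minus)
  finally show ?thesis by (simp add: add_divide_distrib)
qed

definition bits :: "nat \<Rightarrow> (nat \<Rightarrow> real) \<Rightarrow> bool" where
  "bits n x \<longleftrightarrow> (\<forall>i \<in> {1..n}. x i \<in> {0, 1})"

lemma Pv_props: assumes "bits n x" "e \<le> n" shows "Pv x e \<in> \<int> \<and> 0 \<le> Pv x e"
  using assms(2)
proof (induction e)
  case (Suc e)
  have "x (Suc e) \<in> {0,1}" using assms(1) Suc.prems by (auto simp: bits_def)
  then show ?case using Suc by (auto simp: Pv_Suc)
qed simp

lemma Rv_props: assumes "bits n x" "e \<le> n" shows "0 \<le> Rv x n e \<and> Rv x n e < 1"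
proof -
  have "\<forall>e. n - e = k \<longrightarrow> e \<le> n \<longrightarrow> 0 \<le> Rv x n e \<and> Rv x n e < 1" for k
  proof (induction k)
    case 0 then show ?case by auto
  next
    case (Suc k)
    show ?case
    proof (intro allI impI)
      fix e assume h: "n - e = Suc k" "e \<le> n"
      then have "e < n" by simp
      have "x (Suc e) \<in> {0,1}" using assms(1) h by (auto simp: bits_def)
      moreover have "0 \<le> Rv x n (Suc e) \<and> Rv x n (Suc e) < 1" using Suc.IH h by auto
      ultimately show "0 \<le> Rv x n e \<and> Rv x n e < 1" using Rv_Suc[OF \<open>e < n\<close>, of x] by auto
    qed
  qed
  then show ?thesis using assms by auto
qed

lemma PR_sum: assumes "e \<le> n" shows "Pv x e + Rv x n e = 2 ^ e * Rv x n 0"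
  using assms
proof (induction e)
  case (Suc e)
  then have "e < n" by simp
  have "Pv x e + Rv x n e = 2 ^ e * Rv x n 0" using Suc by simp
  then have "2 * (Pv x e + (x (Suc e) + Rv x n (Suc e)) / 2) = 2 * (2 ^ e * Rv x n 0)"
    using Rv_Suc[OF \<open>e < n\<close>, of x] by simp
  then show ?case by (simp add: Pv_Suc field_simps)
qed simp

lemma Rv_grid: assumes "bits n x" "e \<le> n" shows "Rv x n e * 2 ^ (n - e) \<in> \<int>"
proof -
  have a: "Rv x n e = 2 ^ e * Rv x n 0 - Pv x e" using PR_sum[OF assms(2), of x] by simp
  have b: "2 ^ n * Rv x n 0 = Pv x n" using PR_sum[of n n x] by simp
  have "Rv x n e * 2 ^ (n - e) = 2 ^ n * Rv x n 0 - Pv x e * 2 ^ (n - e)"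
    using assms(2) by (simp add: a algebra_simps flip: power_add)
  also have "\<dots> \<in> \<int>" using b Pv_props[OF assms(1)] assms(2) by auto
  finally show ?thesis .
qed

lemma floor_step: assumes "bits n x" "e + s \<le> n"
  shows "of_int \<lfloor>2 ^ s * Rv x n e\<rfloor> = Pv x (e + s) - 2 ^ s * Pv x e"
    and "2 ^ s * Rv x n e - of_int \<lfloor>2 ^ s * Rv x n e\<rfloor> = Rv x n (e + s)"
proof -
  have h1: "2^s * (Pv x e + Rv x n e) = 2^s * (2 ^ e * Rv x n 0)" using PR_sum[of e n x] assms(2) by simp
  have eq: "2 ^ s * Rv x n e = (Pv x (e + s) - 2 ^ s * Pv x e) + Rv x n (e + s)"
    using h1 PR_sum[of "e+s" n x] assms(2) by (simp add: power_add algebra_simps)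
  have "Pv x (e + s) - 2 ^ s * Pv x e \<in> \<int>" using Pv_props[OF assms(1)] assms(2) by auto
  then obtain q where q: "Pv x (e + s) - 2 ^ s * Pv x e = of_int q" by (auto elim: Ints_cases)
  have "\<lfloor>2 ^ s * Rv x n e\<rfloor> = q"
    using Rv_props[OF assms(1), of "e+s"] assms(2) by (intro floor_unique) (auto simp: eq q)
  then show "of_int \<lfloor>2 ^ s * Rv x n e\<rfloor> = Pv x (e + s) - 2 ^ s * Pv x e"
    and "2 ^ s * Rv x n e - of_int \<lfloor>2 ^ s * Rv x n e\<rfloor> = Rv x n (e + s)" using q eq by auto
qed


lemma sum_pairs: "(\<Sum>j<2 + 2 * K. f j) = f 0 + f 1 + (\<Sum>t<K. f (2 + 2 * t) + f (3 + 2 * t))"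
  for f :: "nat \<Rightarrow> real"
proof (induction K)
  case 0 
  have "{..<2 + 2 * 0} = {0, 1::nat}" by auto
  then show ?case by simp
next
  case (Suc K)
  have e: "{..<2 + 2 * Suc K} = insert (3 + 2 * K) (insert (2 + 2 * K) {..<2 + 2 * K})" by auto
  have "(\<Sum>j<2 + 2 * Suc K. f j) = f (3 + 2 * K) + (f (2 + 2 * K) + (\<Sum>j<2 + 2 * K. f j))"
    unfolding e by simp
  then show ?case using Suc by simp
qed
definition coef :: "(nat \<Rightarrow> real) \<Rightarrow> nat \<Rightarrow> real" where
  "coef g j = (if j < 2 then 0 else if (j - 2) mod 2 = 0 then g ((j - 2) div 2) else - g ((j - 2) div 2))"

lemma coef_even[simp]: "coef g (2 + 2 * t) = g t" by (simp add: coef_def)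
lemma coef_odd[simp]: "coef g (3 + 2 * t) = - g t"
proof -
  have "(3 + 2 * t - 2) = Suc (2 * t)" by simp
  then show ?thesis by (simp add: coef_def)
qed
lemma coef_01[simp]: "coef g 0 = 0" "coef g 1 = 0" by (simp_all add: coef_def)

lemma sum_coef: "(\<Sum>j<2 + 2 * K. coef g j * u j) = (\<Sum>t<K. g t * (u (2 + 2 * t) - u (3 + 2 * t)))"
  by (simp only: sum_pairs coef_even coef_odd coef_01) (simp add: right_diff_distrib)
lemma step_ind:
  fixes r \<theta> D :: real
  assumes "r * D \<in> \<int>" "\<theta> * D \<in> \<int>" "D > 0"
  shows "D * max (r - \<theta> + 1 / D) 0 - D * max (r - \<theta>) 0 = (if \<theta> \<le> r then 1 else 0)"
proof (cases "\<theta> \<le> r")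
  case True
  have "r - \<theta> + 1 / D \<ge> 0" using True assms(3) by (simp add: add_nonneg_pos)
  then show ?thesis using True assms(3) by (simp add: algebra_simps)
next
  case False
  have "r * D - \<theta> * D \<in> \<int>" using assms by auto
  then obtain z where z: "r * D - \<theta> * D = of_int z" by (auto elim: Ints_cases)
  have "r * D < \<theta> * D" using False assms(3) by simp
  then have "z < 0" using z by linarith
  then have "z \<le> -1" by simp
  then have "r * D - \<theta> * D \<le> -1" using z by simp
  then have "(r - \<theta>) * D + 1 \<le> 0" by (simp add: algebra_simps)
  then have "(r - \<theta> + 1 / D) * D \<le> 0" using assms(3) by (simp add: algebra_simps)
  then have "r - \<theta> + 1 / D \<le> 0" using assms(3) by (simp add: mult_le_0_iff)
  then show ?thesis using False by simp
qed

lemma count_floor: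
  fixes r :: real
  assumes "0 \<le> r" "r < 1"
  shows "(\<Sum>t<2 ^ s - 1. if real (t + 1) / 2 ^ s \<le> r then 1 else 0 :: real) = of_int \<lfloor>2 ^ s * r\<rfloor>"
proof -
  define f where "f = \<lfloor>2 ^ s * r\<rfloor>"
  have f0: "0 \<le> f" using assms by (simp add: f_def)
  have "2 ^ s * r < 2 ^ s" using assms by simp
  then have "f < 2 ^ s" unfolding f_def by (metis floor_less_iff of_int_numeral of_int_power)
  then have fl: "nat f \<le> 2 ^ s - 1" using f0 by (simp add: nat_le_iff of_nat_diff)
  have iff: "(real (t + 1) / 2 ^ s \<le> r) \<longleftrightarrow> t < nat f" for t
  proof -
    have "(real (t + 1) / 2 ^ s \<le> r) \<longleftrightarrow> real (t + 1) \<le> 2 ^ s * r"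
      by (simp add: divide_le_eq mult.commute)
    also have "\<dots> \<longleftrightarrow> int (t + 1) \<le> f" unfolding f_def
      by (metis le_floor_iff of_int_of_nat_eq)
    also have "\<dots> \<longleftrightarrow> t < nat f" using f0 by linarith
    finally show ?thesis .
  qed
  have "(\<Sum>t<2 ^ s - 1. if real (t + 1) / 2 ^ s \<le> r then 1 else 0 :: real)
      = (\<Sum>t<2 ^ s - 1. if t < nat f then 1 else 0)" by (rule sum.cong[OF refl]) (simp only: iff)
  also have "\<dots> = (\<Sum>t\<in>{t \<in> {..<2 ^ s - 1}. t < nat f}. 1)"
    by (rule sum.inter_filter[symmetric]) simp
  also have "{t \<in> {..<2 ^ s - 1}. t < nat f} = {..<nat f}" using fl by auto
  finally show ?thesis using f0 by (simp add: f_def)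
qed


lemma reindex_dvd:
  fixes X :: real
  assumes "k \<le> m"
  shows "(\<Sum>t<2 ^ m - 1. if 2 ^ (m - k) dvd (t + 1) then (if real (t + 1) / 2 ^ m \<le> X then 1 else 0) else 0 :: real)
       = (\<Sum>u<2 ^ k - 1. if real (u + 1) / 2 ^ k \<le> X then 1 else 0)"
proof -
  define c :: nat where "c = 2 ^ (m - k)"
  have c1: "c \<ge> 1" by (simp add: c_def)
  have dm: "(2::nat) ^ m = c * 2 ^ k" using assms by (simp add: c_def flip: power_add)
  define h where "h u = (u + 1) * c - 1" for u
  define g where "g t = (if c dvd (t + 1) then (if real (t + 1) / 2 ^ m \<le> X then 1 else 0) else 0 :: real)" for t
  have hu: "h u + 1 = (u + 1) * c" for u using c1 unfolding h_def by (simp add: Suc_le_eq)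
  have hinj: "inj_on h {..<2 ^ k - 1}"
  proof (rule inj_onI)
    fix u v assume "h u = h v"
    then have "(u + 1) * c = (v + 1) * c" using hu[of u] hu[of v] by simp
    then show "u = v" using c1 by simp
  qed
  have himg: "h ` {..<2 ^ k - 1} \<subseteq> {..<2 ^ m - 1}"
  proof
    fix t assume "t \<in> h ` {..<2 ^ k - 1}"
    then obtain u where u: "u < 2 ^ k - 1" "t = h u" by auto
    have "u + 1 \<le> 2 ^ k - 1" using u by simp
    then have "(u + 1) * c \<le> (2 ^ k - 1) * c" by (rule mult_le_mono1)
    also have "\<dots> = 2 ^ m - c" using dm by (simp add: diff_mult_distrib2 mult.commute)
    finally have "t + 1 \<le> 2 ^ m - c" using u hu by simp
    then show "t \<in> {..<2 ^ m - 1}" using c1 by simp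
  qed
  have "(\<Sum>u<2 ^ k - 1. if real (u + 1) / 2 ^ k \<le> X then 1 else 0) = (\<Sum>u<2 ^ k - 1. g (h u))"
  proof (rule sum.cong[OF refl])
    fix u
    have dmr: "(2::real) ^ m = real c * 2 ^ k" using arg_cong[OF dm, of real] by simp
    have "real (h u + 1) = real (u + 1) * real c" using hu[of u] by (metis of_nat_mult)
    then have "real (h u + 1) / 2 ^ m = real (u + 1) / 2 ^ k"
      using dmr c1 by simp
    moreover have "c dvd (h u + 1)" using hu[of u] by simp
    ultimately show "(if real (u + 1) / 2 ^ k \<le> X then 1 else 0) = g (h u)"
      unfolding g_def by simp
  qed
  also have "\<dots> = sum g (h ` {..<2 ^ k - 1})" using sum.reindex[OF hinj, of g] by (simp add: comp_def)
  also have "\<dots> = sum g {..<2 ^ m - 1}"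
  proof (rule sum.mono_neutral_left)
    show "\<forall>t\<in>{..<2 ^ m - 1} - h ` {..<2 ^ k - 1}. g t = 0"
    proof
      fix t assume t: "t \<in> {..<2 ^ m - 1} - h ` {..<2 ^ k - 1}"
      show "g t = 0"
      proof (cases "c dvd (t + 1)")
        case True
        then obtain q where q: "t + 1 = c * q" by (auto elim: dvdE)
        have "q \<ge> 1" using q by (cases q) auto
        have "t + 1 < 2 ^ m" using t by auto
        then have "c * q < c * 2 ^ k" using q dm by simp
        then have "q < 2 ^ k" using c1 by simp
        then have "q - 1 < 2 ^ k - 1" using \<open>q \<ge> 1\<close> by simp
        moreover have "h (q - 1) = t" using q \<open>q \<ge> 1\<close> unfolding h_def by (simp add: mult.commute)
        ultimately have "t \<in> h ` {..<2 ^ k - 1}" by auto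
        then show ?thesis using t by simp
      qed (simp add: g_def)
    qed
  qed (use himg in auto)
  finally show ?thesis by (simp add: g_def c_def)
qed

definition mk_layer :: "nat \<Rightarrow> nat \<Rightarrow> (nat \<Rightarrow> nat \<Rightarrow> real) \<Rightarrow> (nat \<Rightarrow> real) \<Rightarrow> real list list \<times> real list" where
  "mk_layer r c F G = (map (\<lambda>i. map (\<lambda>j. F i j) [0..<c]) [0..<r], map G [0..<r])"

lemma mk_layer_wf: "is_matrix r c (fst (mk_layer r c F G))" "length (snd (mk_layer r c F G)) = r"
  by (auto simp: mk_layer_def is_matrix_def)

lemma affine_mk: assumes "length v = c"
  shows "affine (fst (mk_layer r c F G)) (snd (mk_layer r c F G)) v = map (\<lambda>i. (\<Sum>j<c. F i j * v ! j) + G i) [0..<r]"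
  using assms by (auto simp: affine_def mk_layer_def intro!: sum.cong)

lemma relu_affine_mk: assumes "length v = c"
  shows "relu_vec (affine (fst (mk_layer r c F G)) (snd (mk_layer r c F G)) v) = map (\<lambda>i. max ((\<Sum>j<c. F i j * v ! j) + G i) 0) [0..<r]"
  using assms by (simp add: affine_mk relu_vec_def)

definition hid :: "(real list list \<times> real list) list \<Rightarrow> real list \<Rightarrow> real list" where
  "hid hs x = foldl (\<lambda>v l. relu_vec (affine (fst l) (snd l) v)) x hs"

lemma hid_snoc: "hid (hs @ [l]) x = relu_vec (affine (fst l) (snd l) (hid hs x))"
  by (simp add: hid_def)

lemma realize_snoc: "realize (hs @ [l]) x = affine (fst l) (snd l) (hid hs x)"
proof (induction hs arbitrary: x)
  case Nil then show ?case by (cases l) (simp add: hid_def)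
next
  case (Cons h t)
  obtain A b where h: "h = (A, b)" by (cases h)
  obtain y ys where e: "t @ [l] = y # ys" by (cases "t @ [l]") auto
  have "realize (h # t @ [l]) x = realize (t @ [l]) (relu_vec (affine A b x))"
    unfolding e h by simp
  then show ?case using Cons by (simp add: hid_def h)
qed

lemma sum_single: fixes N a :: nat assumes "a < N"
  shows "(\<Sum>j<N. (if j = a then c else 0) * u j) = (c * u a :: real)"
proof -
  have "(\<Sum>j<N. (if j = a then c else 0) * u j) = (\<Sum>j<N. if j = a then c * u a else 0)"
    by (rule sum.cong) auto
  also have "\<dots> = c * u a" using assms by (subst sum.delta) auto
  finally show ?thesis .
qed

definition Gs :: "nat \<Rightarrow> nat \<Rightarrow> nat \<Rightarrow> nat \<Rightarrow> real" where
  "Gs s e n i = (if i < 2 then 0 else - (real ((i - 2) div 2 + 1) / 2 ^ s) + (if (i - 2) mod 2 = 0 then 1 / 2 ^ (n - e) else 0))"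

definition stepL :: "nat \<Rightarrow> nat \<Rightarrow> nat \<Rightarrow> nat \<Rightarrow> (nat \<Rightarrow> real) \<Rightarrow> (nat \<Rightarrow> real) \<Rightarrow> real list list \<times> real list" where
  "stepL s e n w \<alpha> \<beta> = mk_layer (2 * 2 ^ s) w (\<lambda>i j. if i = 0 then \<alpha> j else \<beta> j) (Gs s e n)"

definition aN :: "nat \<Rightarrow> nat \<Rightarrow> nat \<Rightarrow> nat \<Rightarrow> real" where
  "aN s e n j = (if j = 0 then 2 ^ s else 0) + coef (\<lambda>_. 2 ^ (n - e)) j"
definition bN :: "nat \<Rightarrow> nat \<Rightarrow> nat \<Rightarrow> nat \<Rightarrow> real" where
  "bN s e n j = (if j = 1 then 2 ^ s else 0) - coef (\<lambda>_. 2 ^ (n - e)) j"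

lemma two_s: "(2::nat) * 2 ^ s = 2 + 2 * (2 ^ s - 1)"
proof -
  have "(2::nat) ^ s \<ge> 1" by simp
  then show ?thesis by linarith
qed

lemma step_vals:
  fixes v :: "real list"
  assumes "length v = w" and a: "(\<Sum>j<w. \<alpha> j * v ! j) = a" and r: "(\<Sum>j<w. \<beta> j * v ! j) = r"
    and "0 \<le> a" "0 \<le> r" and grid: "r * 2 ^ (n - e) \<in> \<int>" and "s \<le> n - e"
  defines "v' \<equiv> relu_vec (affine (fst (stepL s e n w \<alpha> \<beta>)) (snd (stepL s e n w \<alpha> \<beta>)) v)"
  shows "length v' = 2 * 2 ^ s" "v' ! 0 = a" "v' ! 1 = r"
    "\<And>t::nat. t < 2 ^ s - 1 \<Longrightarrow> 2 ^ (n - e) * (v' ! (2 + 2 * t)) - 2 ^ (n - e) * (v' ! (3 + 2 * t))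
        = (if real (t + 1) / 2 ^ s \<le> r then 1 else 0)"
proof -
  have V: "v' = map (\<lambda>i. max ((if i = 0 then a else r) + Gs s e n i) 0) [0..<2 * 2 ^ s]"
    unfolding v'_def stepL_def using assms(1) by (simp add: relu_affine_mk a r if_distrib cong: if_cong)
  show "length v' = 2 * 2 ^ s" by (simp add: V)
  have "(0::nat) < 2 * 2 ^ s" by simp
  then show "v' ! 0 = a" using \<open>0 \<le> a\<close> by (simp add: V Gs_def del: nth_map_upt)
  have "(1::nat) < 2 * 2 ^ s" using two_s[of s] by linarith
  then show "v' ! 1 = r" using \<open>0 \<le> r\<close> by (simp add: V Gs_def del: nth_map_upt)
  fix t :: nat assume t: "t < 2 ^ s - 1"
  define \<theta> where "\<theta> = real (t + 1) / 2 ^ s"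
  have b2: "2 + 2 * t < 2 * 2 ^ s" "3 + 2 * t < 2 * 2 ^ s" using t two_s[of s] by linarith+
  have e2: "(2 + 2 * t - 2) = 2 * t" by simp
  have e3: "(3 + 2 * t - 2) = Suc (2 * t)" by simp
  have i2: "v' ! (2 + 2 * t) = max (r - \<theta> + 1 / 2 ^ (n - e)) 0"
    using b2(1) by (simp add: V Gs_def \<theta>_def del: nth_map_upt)
  have i3: "v' ! (3 + 2 * t) = max (r - \<theta>) 0"
    using b2(2) unfolding V by (simp add: Gs_def \<theta>_def e3 del: nth_map_upt)
  have pw: "(2::real) ^ (n - e) = 2 ^ s * 2 ^ (n - e - s)" using \<open>s \<le> n - e\<close>
    by (simp flip: power_add)
  have "\<theta> * 2 ^ (n - e) = real (t + 1) * 2 ^ (n - e - s)" unfolding \<theta>_def pw by simp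
  then have tg: "\<theta> * 2 ^ (n - e) \<in> \<int>" by simp
  show "2 ^ (n - e) * (v' ! (2 + 2 * t)) - 2 ^ (n - e) * (v' ! (3 + 2 * t))
        = (if real (t + 1) / 2 ^ s \<le> r then 1 else 0)"
    unfolding i2 i3 using step_ind[OF grid tg] by (simp add: \<theta>_def)
qed

lemma step_sums:
  fixes v :: "real list"
  assumes bits: "bits n x" and es: "e + s \<le> n" and lv: "length v = w"
    and a: "(\<Sum>j<w. \<alpha> j * v ! j) = Pv x e" and r: "(\<Sum>j<w. \<beta> j * v ! j) = Rv x n e"
  defines "v' \<equiv> relu_vec (affine (fst (stepL s e n w \<alpha> \<beta>)) (snd (stepL s e n w \<alpha> \<beta>)) v)"
  shows "length v' = 2 * 2 ^ s"
    "(\<Sum>j<2 * 2 ^ s. aN s e n j * v' ! j) = Pv x (e + s)"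
    "(\<Sum>j<2 * 2 ^ s. bN s e n j * v' ! j) = Rv x n (e + s)"
proof -
  have en: "e \<le> n" using es by simp
  have a0: "0 \<le> Pv x e" using Pv_props[OF bits en] by simp
  have r0: "0 \<le> Rv x n e" "Rv x n e < 1" using Rv_props[OF bits en] by auto
  have sv: "s \<le> n - e" using es by simp
  note SV = step_vals[OF lv a r a0 r0(1) Rv_grid[OF bits en] sv, folded v'_def]
  show "length v' = 2 * 2 ^ s" by (rule SV(1))
  have "(\<Sum>j<2 * 2 ^ s. coef (\<lambda>_. 2 ^ (n - e)) j * v' ! j)
      = (\<Sum>t<2 ^ s - 1. 2 ^ (n - e) * (v' ! (2 + 2 * t) - v' ! (3 + 2 * t)))"
    unfolding two_s[of s] by (rule sum_coef)
  also have "\<dots> = (\<Sum>t<2 ^ s - 1. if real (t + 1) / 2 ^ s \<le> Rv x n e then 1 else 0)"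
  proof (rule sum.cong[OF refl])
    fix t :: nat assume "t \<in> {..<2 ^ s - 1}"
    then show "2 ^ (n - e) * (v' ! (2 + 2 * t) - v' ! (3 + 2 * t)) = (if real (t + 1) / 2 ^ s \<le> Rv x n e then 1 else 0)"
      by (subst right_diff_distrib, intro SV(4)) simp
  qed
  also have "\<dots> = of_int \<lfloor>2 ^ s * Rv x n e\<rfloor>" by (rule count_floor[OF r0])
  finally have SC: "(\<Sum>j<2 * 2 ^ s. coef (\<lambda>_. 2 ^ (n - e)) j * v' ! j) = of_int \<lfloor>2 ^ s * Rv x n e\<rfloor>" .
  have p0: "(0::nat) < 2 * 2 ^ s" by simp
  have p1: "(1::nat) < 2 * 2 ^ s" using two_s[of s] by linarith
  have "(\<Sum>j<2 * 2 ^ s. aN s e n j * v' ! j) = (\<Sum>j<2 * 2 ^ s. (if j = 0 then 2 ^ s else 0) * v' ! j)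
      + (\<Sum>j<2 * 2 ^ s. coef (\<lambda>_. 2 ^ (n - e)) j * v' ! j)"
    unfolding aN_def by (simp add: distrib_right sum.distrib)
  also have "\<dots> = 2 ^ s * Pv x e + of_int \<lfloor>2 ^ s * Rv x n e\<rfloor>"
    unfolding SC sum_single[OF p0] SV(2) ..
  also have "\<dots> = Pv x (e + s)" using floor_step(1)[OF bits es] by simp
  finally show "(\<Sum>j<2 * 2 ^ s. aN s e n j * v' ! j) = Pv x (e + s)" .
  have "(\<Sum>j<2 * 2 ^ s. bN s e n j * v' ! j) = (\<Sum>j<2 * 2 ^ s. (if j = 1 then 2 ^ s else 0) * v' ! j)
      - (\<Sum>j<2 * 2 ^ s. coef (\<lambda>_. 2 ^ (n - e)) j * v' ! j)"
    unfolding bN_def by (simp add: left_diff_distrib sum_subtractf)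
  also have "\<dots> = 2 ^ s * Rv x n e - of_int \<lfloor>2 ^ s * Rv x n e\<rfloor>"
    unfolding SC sum_single[OF p1] SV(3) ..
  also have "\<dots> = Rv x n (e + s)" using floor_step(2)[OF bits es] by simp
  finally show "(\<Sum>j<2 * 2 ^ s. bN s e n j * v' ! j) = Rv x n (e + s)" .
qed

definition Nsl :: "nat list \<Rightarrow> nat list" where
  "Nsl ss = 1 # map (\<lambda>s. 2 * 2 ^ s) ss"

definition hwf :: "nat list \<Rightarrow> (real list list \<times> real list) list \<Rightarrow> bool" where
  "hwf Ns hs \<longleftrightarrow> length Ns = length hs + 1 \<and>
     (\<forall>l<length hs. is_matrix (Ns ! (l + 1)) (Ns ! l) (fst (hs ! l)) \<and> length (snd (hs ! l)) = Ns ! (l + 1))"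

lemma Nsl_snoc: "Nsl (ss @ [s]) = Nsl ss @ [2 * 2 ^ s]" by (simp add: Nsl_def)
lemma last_Nsl_snoc: "last (Nsl (ss @ [s])) = 2 * 2 ^ s" by (simp add: Nsl_snoc)
lemma length_Nsl: "length (Nsl ss) = length ss + 1" by (simp add: Nsl_def)

lemma hwf_snoc:
  assumes "hwf Ns hs" "is_matrix k (last Ns) (fst l)" "length (snd l) = k"
  shows "hwf (Ns @ [k]) (hs @ [l])"
proof -
  have L: "length Ns = length hs + 1" using assms(1) by (simp add: hwf_def)
  have "\<forall>i<length (hs @ [l]). is_matrix ((Ns @ [k]) ! (i + 1)) ((Ns @ [k]) ! i) (fst ((hs @ [l]) ! i)) \<and>
         length (snd ((hs @ [l]) ! i)) = (Ns @ [k]) ! (i + 1)"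
  proof (intro allI impI)
    fix i assume "i < length (hs @ [l])"
    then have "i < length hs \<or> i = length hs" by auto
    then show "is_matrix ((Ns @ [k]) ! (i + 1)) ((Ns @ [k]) ! i) (fst ((hs @ [l]) ! i)) \<and>
         length (snd ((hs @ [l]) ! i)) = (Ns @ [k]) ! (i + 1)"
    proof
      assume i: "i < length hs"
      then show ?thesis using assms(1) L by (simp add: hwf_def nth_append)
    next
      assume i: "i = length hs"
      have "Ns ! length hs = last Ns" using L by (subst last_conv_nth) auto
      then show ?thesis using i L assms(2,3) by (simp add: nth_append)
    qed
  qed
  then show ?thesis using L by (simp add: hwf_def)
qed

lemma build:
  "sum_list ss \<le> n \<Longrightarrow> \<exists>hs \<alpha> \<beta>. hwf (Nsl ss) hs \<and>
     (\<forall>x. bits n x \<longrightarrow> length (hid hs [Rv x n 0]) = last (Nsl ss) \<and>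
        (\<Sum>j<last (Nsl ss). \<alpha> j * hid hs [Rv x n 0] ! j) = Pv x (sum_list ss) \<and>
        (\<Sum>j<last (Nsl ss). \<beta> j * hid hs [Rv x n 0] ! j) = Rv x n (sum_list ss))"
proof (induction ss rule: rev_induct)
  case Nil
  show ?case
    by (rule exI[of _ "[]"], rule exI[of _ "\<lambda>_. 0"], rule exI[of _ "\<lambda>_. 1"])
       (simp add: hwf_def Nsl_def hid_def)
next
  case (snoc s ss)
  define e where "e = sum_list ss"
  have es: "e + s \<le> n" using snoc.prems by (simp add: e_def)
  then obtain hs \<alpha> \<beta> where H: "hwf (Nsl ss) hs"
    "\<And>x. bits n x \<Longrightarrow> length (hid hs [Rv x n 0]) = last (Nsl ss) \<and>
        (\<Sum>j<last (Nsl ss). \<alpha> j * hid hs [Rv x n 0] ! j) = Pv x e \<and>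
        (\<Sum>j<last (Nsl ss). \<beta> j * hid hs [Rv x n 0] ! j) = Rv x n e"
    using snoc.IH unfolding e_def by fastforce
  define w where "w = last (Nsl ss)"
  define l where "l = stepL s e n w \<alpha> \<beta>"
  show ?case
  proof (intro exI conjI allI impI)
    show "hwf (Nsl (ss @ [s])) (hs @ [l])" unfolding Nsl_snoc
      by (rule hwf_snoc[OF H(1)]) (simp_all add: l_def stepL_def mk_layer_wf w_def)
    fix x assume bx: "bits n x"
    have h: "length (hid hs [Rv x n 0]) = w"
      "(\<Sum>j<w. \<alpha> j * hid hs [Rv x n 0] ! j) = Pv x e"
      "(\<Sum>j<w. \<beta> j * hid hs [Rv x n 0] ! j) = Rv x n e" using H(2)[OF bx] by (auto simp: w_def)
    note S = step_sums[OF bx es h, folded l_def hid_snoc]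
    show "length (hid (hs @ [l]) [Rv x n 0]) = last (Nsl (ss @ [s]))"
      using S(1) by (simp add: last_Nsl_snoc)
    show "(\<Sum>j<last (Nsl (ss @ [s])). aN s e n j * hid (hs @ [l]) [Rv x n 0] ! j) = Pv x (sum_list (ss @ [s]))"
      using S(2) by (simp add: last_Nsl_snoc e_def)
    show "(\<Sum>j<last (Nsl (ss @ [s])). bN s e n j * hid (hs @ [l]) [Rv x n 0] ! j) = Rv x n (sum_list (ss @ [s]))"
      using S(3) by (simp add: last_Nsl_snoc e_def)
  qed
qed

lemma exists_split: "m \<le> L * c \<Longrightarrow> \<exists>ss. length ss = L \<and> sum_list ss = m \<and> (\<forall>s\<in>set ss. s \<le> c)"
proof (induction L arbitrary: m)
  case 0 then show ?case by simp
next
  case (Suc L)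
  have "m - min c m \<le> L * c" using Suc.prems by auto
  then obtain ss where "length ss = L" "sum_list ss = m - min c m" "\<forall>s\<in>set ss. s \<le> c"
    using Suc.IH by blast
  then show ?case by (intro exI[of _ "min c m # ss"]) auto
qed

lemma ceil_bound:
  assumes "1 \<le> L" shows "m \<le> L * nat \<lceil>real m / real L\<rceil>"
proof -
  have "real m / real L \<le> of_int \<lceil>real m / real L\<rceil>" by (rule le_of_int_ceiling)
  moreover have "0 \<le> real m / real L" by simp
  then have "0 \<le> \<lceil>real m / real L\<rceil>" by linarith
  ultimately have "real m / real L \<le> real (nat \<lceil>real m / real L\<rceil>)" by simp
  then have X: "real m / real L \<le> real (nat \<lceil>real m / real L\<rceil>)" .
  have Lp: "real L > 0" using assms by simp
  have "real m = real m / real L * real L" using Lp by simp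
  also have "\<dots> \<le> real (nat \<lceil>real m / real L\<rceil>) * real L"
    using X Lp by (intro mult_right_mono) auto
  finally have "real m \<le> real L * real (nat \<lceil>real m / real L\<rceil>)" by (simp add: mult.commute)
  then show ?thesis by (metis of_nat_le_iff of_nat_mult)
qed

lemma input_eq: "(\<Sum>i = 1..n. 2 powi (- int i) * x i) = Rv x n 0"
  by (simp add: Rv_def)

lemma part2:
  fixes m n L :: nat
  assumes "m \<le> n" "1 \<le> L"
  shows "\<exists>f \<in> NN 1 2 (2 ^ (nat \<lceil>real m / real L\<rceil> + 2) + 2) L.
              \<forall>x :: nat \<Rightarrow> real. (\<forall>i \<in> {1..n}. x i \<in> {0, 1}) \<longrightarrow>
                f [\<Sum>i = 1..n. 2 powi (- int i) * x i]
                  = [\<Sum>i = 1..m. 2 powi (int m - int i) * x i,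
                     \<Sum>i = m + 1..n. 2 powi (int m - int i) * x i]"
proof -
  define c where "c = nat \<lceil>real m / real L\<rceil>"
  obtain ss where ss: "length ss = L" "sum_list ss = m" "\<forall>s\<in>set ss. s \<le> c"
    using exists_split[OF ceil_bound[OF assms(2)]] unfolding c_def by blast
  obtain hs \<alpha> \<beta> where H: "hwf (Nsl ss) hs"
    "\<And>x. bits n x \<Longrightarrow> length (hid hs [Rv x n 0]) = last (Nsl ss) \<and>
        (\<Sum>j<last (Nsl ss). \<alpha> j * hid hs [Rv x n 0] ! j) = Pv x m \<and>
        (\<Sum>j<last (Nsl ss). \<beta> j * hid hs [Rv x n 0] ! j) = Rv x n m"
    using build[of ss n] ss(2) assms(1) by auto
  define w where "w = last (Nsl ss)"
  define out where "out = mk_layer 2 w (\<lambda>i j. if i = 0 then \<alpha> j else \<beta> j) (\<lambda>_. 0)"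
  have HW: "hwf (Nsl ss @ [2]) (hs @ [out])"
    by (rule hwf_snoc[OF H(1)]) (simp_all add: out_def mk_layer_wf w_def)
  have lhs: "length hs = L" using H(1) ss(1) by (simp add: hwf_def length_Nsl)
  have wf: "wf_net 1 2 (2 ^ (c + 2) + 2) L (Nsl ss @ [2]) (hs @ [out])"
    unfolding wf_net_def
  proof (intro conjI)
    show "length (Nsl ss @ [2]) = L + 2" using ss(1) by (simp add: length_Nsl)
    show "length (hs @ [out]) = L + 1" using lhs by simp
    show "(Nsl ss @ [2]) ! 0 = 1" by (simp add: Nsl_def)
    show "(Nsl ss @ [2]) ! (L + 1) = 2" using ss(1) by (simp add: nth_append length_Nsl)
    show "\<forall>l\<le>L. is_matrix ((Nsl ss @ [2]) ! (l + 1)) ((Nsl ss @ [2]) ! l) (fst ((hs @ [out]) ! l)) \<and>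
        length (snd ((hs @ [out]) ! l)) = (Nsl ss @ [2]) ! (l + 1)"
      using HW lhs by (auto simp: hwf_def)
    show "\<forall>l\<in>{1..L}. (Nsl ss @ [2]) ! l \<le> 2 ^ (c + 2) + 2"
    proof
      fix l assume l: "l \<in> {1..L}"
      then have "(Nsl ss @ [2]) ! l = 2 * 2 ^ (ss ! (l - 1))"
        using ss(1) by (cases l) (auto simp: nth_append Nsl_def)
      also have "ss ! (l - 1) \<le> c" using ss l by auto
      then have "2 * 2 ^ (ss ! (l - 1)) \<le> (2::nat) * 2 ^ c" by simp
      also have "(2::nat) * 2 ^ c \<le> 2 ^ (c + 2) + 2" by simp
      finally show "(Nsl ss @ [2]) ! l \<le> 2 ^ (c + 2) + 2" .
    qed
  qed
  show ?thesis
  proof (rule bexI)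
    show "realize (hs @ [out]) \<in> NN 1 2 (2 ^ (nat \<lceil>real m / real L\<rceil> + 2) + 2) L"
      using wf unfolding NN_def c_def by blast
    show "\<forall>x :: nat \<Rightarrow> real. (\<forall>i \<in> {1..n}. x i \<in> {0, 1}) \<longrightarrow>
                realize (hs @ [out]) [\<Sum>i = 1..n. 2 powi (- int i) * x i]
                  = [\<Sum>i = 1..m. 2 powi (int m - int i) * x i,
                     \<Sum>i = m + 1..n. 2 powi (int m - int i) * x i]"
    proof (intro allI impI)
      fix x :: "nat \<Rightarrow> real" assume "\<forall>i \<in> {1..n}. x i \<in> {0, 1}"
      then have bx: "bits n x" by (simp add: bits_def)
      note h = H(2)[OF bx, folded w_def]
      have "realize (hs @ [out]) [\<Sum>i = 1..n. 2 powi (- int i) * x i]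
          = map (\<lambda>i. (\<Sum>j<w. (if i = 0 then \<alpha> j else \<beta> j) * hid hs [Rv x n 0] ! j) + 0) [0..<2]"
        unfolding input_eq realize_snoc out_def using h by (simp add: affine_mk)
      also have "\<dots> = [Pv x m, Rv x n m]" using h by (simp add: upt_rec)
      finally show "realize (hs @ [out]) [\<Sum>i = 1..n. 2 powi (- int i) * x i]
                  = [\<Sum>i = 1..m. 2 powi (int m - int i) * x i,
                     \<Sum>i = m + 1..n. 2 powi (int m - int i) * x i]"
        by (simp add: Pv_def Rv_def)
    qed
  qed
qed

definition gam :: "nat \<Rightarrow> nat \<Rightarrow> nat \<Rightarrow> nat \<Rightarrow> real" where
  "gam m n k j = coef (\<lambda>t. if 2 ^ (m - k) dvd (t + 1) then 2 ^ n else 0) j"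

lemma part1:
  fixes m n :: nat
  assumes "m \<le> n"
  shows "\<exists>f \<in> NN 1 (m + 1) (2 ^ (m + 2) + 1) 1.
            \<forall>x :: nat \<Rightarrow> real. (\<forall>i \<in> {1..n}. x i \<in> {0, 1}) \<longrightarrow>
              f [\<Sum>i = 1..n. 2 powi (- int i) * x i]
                = map x [1..<m + 1] @ [\<Sum>i = m + 1..n. 2 powi (int m - int i) * x i]"
proof -
  define l1 where "l1 = stepL m 0 n 1 (\<lambda>_. 0) (\<lambda>_. 1)"
  define Fo where "Fo i j = (if i < m then gam m n (i + 1) j - 2 * gam m n i j else bN m 0 n j)" for i j
  define out where "out = mk_layer (m + 1) (2 * 2 ^ m) Fo (\<lambda>_. 0)"
  have H0: "hwf (Nsl []) []" by (simp add: hwf_def Nsl_def)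
  have H1: "hwf (Nsl [m]) [l1]" using hwf_snoc[OF H0, of "2 * 2 ^ m" l1]
    by (simp add: l1_def stepL_def mk_layer_wf Nsl_def)
  have HW: "hwf (Nsl [m] @ [m + 1]) [l1, out]" using hwf_snoc[OF H1, of "m + 1" out]
    by (simp add: out_def mk_layer_wf Nsl_def)
  have wf: "wf_net 1 (m + 1) (2 ^ (m + 2) + 1) 1 (Nsl [m] @ [m + 1]) [l1, out]"
    unfolding wf_net_def
  proof (intro conjI)
    show "\<forall>l\<le>1. is_matrix ((Nsl [m] @ [m + 1]) ! (l + 1)) ((Nsl [m] @ [m + 1]) ! l) (fst ([l1, out] ! l)) \<and>
        length (snd ([l1, out] ! l)) = (Nsl [m] @ [m + 1]) ! (l + 1)"
      using HW by (auto simp: hwf_def)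
    show "\<forall>l\<in>{1..1}. (Nsl [m] @ [m + 1]) ! l \<le> 2 ^ (m + 2) + 1" by (simp add: Nsl_def)
  qed (simp_all add: Nsl_def)
  show ?thesis
  proof (rule bexI)
    show "realize [l1, out] \<in> NN 1 (m + 1) (2 ^ (m + 2) + 1) 1"
      using wf unfolding NN_def by blast
    show "\<forall>x :: nat \<Rightarrow> real. (\<forall>i \<in> {1..n}. x i \<in> {0, 1}) \<longrightarrow>
              realize [l1, out] [\<Sum>i = 1..n. 2 powi (- int i) * x i]
                = map x [1..<m + 1] @ [\<Sum>i = m + 1..n. 2 powi (int m - int i) * x i]"
    proof (intro allI impI)
      fix x :: "nat \<Rightarrow> real" assume "\<forall>i \<in> {1..n}. x i \<in> {0, 1}"
      then have bx: "bits n x" by (simp add: bits_def)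
      define v' where "v' = relu_vec (affine (fst l1) (snd l1) [Rv x n 0])"
      have lv: "length [Rv x n 0] = 1" by simp
      have sa: "(\<Sum>j<1. (\<lambda>_. 0) j * [Rv x n 0] ! j) = Pv x 0" by simp
      have sb: "(\<Sum>j<1. (\<lambda>_. 1) j * [Rv x n 0] ! j) = Rv x n 0" by simp
      have mn: "0 + m \<le> n" using assms by simp
      note S = step_sums[OF bx mn lv sa sb, folded l1_def v'_def]
      have p0: "0 \<le> Pv x 0" by simp
      have r0: "0 \<le> Rv x n 0" using Rv_props[OF bx, of 0] by simp
      have mle: "m \<le> n - 0" using assms by simp
      note SV = step_vals[where s=m, OF lv sa sb p0 r0 Rv_grid[OF bx, of 0] mle, folded l1_def v'_def]
      have SV4: "2 ^ n * v' ! (2 + 2 * t) - 2 ^ n * v' ! (3 + 2 * t) = (if real (t + 1) / 2 ^ m \<le> Rv x n 0 then 1 else 0)"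
        if "t < 2 ^ m - 1" for t :: nat
        using SV(4)[of t] that by (simp add: v'_def)
      have G: "(\<Sum>j<2 * 2 ^ m. gam m n k j * v' ! j) = Pv x k" if k: "k \<le> m" for k
      proof -
        have "(\<Sum>j<2 * 2 ^ m. gam m n k j * v' ! j)
          = (\<Sum>t<2 ^ m - 1. (if 2 ^ (m - k) dvd (t + 1) then 2 ^ n else 0) * (v' ! (2 + 2 * t) - v' ! (3 + 2 * t)))"
          unfolding two_s[of m] gam_def by (rule sum_coef)
        also have "\<dots> = (\<Sum>t<2 ^ m - 1. if 2 ^ (m - k) dvd (t + 1) then (if real (t + 1) / 2 ^ m \<le> Rv x n 0 then 1 else 0) else 0)"
        proof (rule sum.cong[OF refl])
          fix t :: nat assume "t \<in> {..<2 ^ m - 1}"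
          then show "(if 2 ^ (m - k) dvd (t + 1) then 2 ^ n else 0) * (v' ! (2 + 2 * t) - v' ! (3 + 2 * t))
              = (if 2 ^ (m - k) dvd (t + 1) then (if real (t + 1) / 2 ^ m \<le> Rv x n 0 then 1 else 0) else 0)"
            using SV4[of t] by (simp add: right_diff_distrib)
        qed
        also have "\<dots> = (\<Sum>u<2 ^ k - 1. if real (u + 1) / 2 ^ k \<le> Rv x n 0 then 1 else 0)"
          by (rule reindex_dvd[OF k])
        also have "\<dots> = of_int \<lfloor>2 ^ k * Rv x n 0\<rfloor>"
          using Rv_props[OF bx, of 0] by (intro count_floor) auto
        also have "\<dots> = Pv x k" using floor_step(1)[OF bx, of 0 k] k assms by simp
        finally show ?thesis .
      qed
      have R: "realize [l1, out] [\<Sum>i = 1..n. 2 powi (- int i) * x i]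
          = map (\<lambda>i. (\<Sum>j<2 * 2 ^ m. Fo i j * v' ! j) + 0) [0..<m + 1]"
        using realize_snoc[of "[l1]" out] S(1) unfolding input_eq out_def
        by (simp add: affine_mk hid_def v'_def)
      show "realize [l1, out] [\<Sum>i = 1..n. 2 powi (- int i) * x i]
                = map x [1..<m + 1] @ [\<Sum>i = m + 1..n. 2 powi (int m - int i) * x i]"
        unfolding R
      proof (rule nth_equalityI)
        show "length (map (\<lambda>i. (\<Sum>j<2 * 2 ^ m. Fo i j * v' ! j) + 0) [0..<m + 1]) =
          length (map x [1..<m + 1] @ [\<Sum>i = m + 1..n. 2 powi (int m - int i) * x i])" by simp
        fix i assume "i < length (map (\<lambda>i. (\<Sum>j<2 * 2 ^ m. Fo i j * v' ! j) + 0) [0..<m + 1])"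
        then have i: "i < m + 1" by simp
        show "map (\<lambda>i. (\<Sum>j<2 * 2 ^ m. Fo i j * v' ! j) + 0) [0..<m + 1] ! i =
          (map x [1..<m + 1] @ [\<Sum>i = m + 1..n. 2 powi (int m - int i) * x i]) ! i"
        proof (cases "i < m")
          case True
          have "(\<Sum>j<2 * 2 ^ m. Fo i j * v' ! j) = (\<Sum>j<2 * 2 ^ m. gam m n (i + 1) j * v' ! j)
              - 2 * (\<Sum>j<2 * 2 ^ m. gam m n i j * v' ! j)"
            using True by (simp add: Fo_def left_diff_distrib sum_subtractf sum_distrib_left mult.assoc)
          also have "\<dots> = Pv x (i + 1) - 2 * Pv x i" using True G[of i] G[of "i + 1"] by simp
          also have "\<dots> = x (i + 1)" by (simp add: Pv_Suc)
          finally show ?thesis using True i by (simp add: nth_append del: upt_Suc)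
        next
          case False
          then have im: "i = m" using i by simp
          have "(\<Sum>j<2 * 2 ^ m. Fo i j * v' ! j) = Rv x n m"
            using S(3) im by (simp add: Fo_def v'_def)
          then show ?thesis using im by (simp add: nth_append Rv_def del: upt_Suc)
        qed
      qed
    qed
  qed
qed

theorem mainTheorem5:
  fixes m n :: nat
  assumes "1 \<le> m" and "m \<le> n"
  shows "(\<exists>f \<in> NN 1 (m + 1) (2 ^ (m + 2) + 1) 1.
            \<forall>x :: nat \<Rightarrow> real. (\<forall>i \<in> {1..n}. x i \<in> {0, 1}) \<longrightarrow>
              f [\<Sum>i = 1..n. 2 powi (- int i) * x i]
                = map x [1..<m + 1] @ [\<Sum>i = m + 1..n. 2 powi (int m - int i) * x i])
       \<and> (\<forall>L :: nat. 1 \<le> L \<longrightarrow>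
           (\<exists>f \<in> NN 1 2 (2 ^ (nat \<lceil>real m / real L\<rceil> + 2) + 2) L.
              \<forall>x :: nat \<Rightarrow> real. (\<forall>i \<in> {1..n}. x i \<in> {0, 1}) \<longrightarrow>
                f [\<Sum>i = 1..n. 2 powi (- int i) * x i]
                  = [\<Sum>i = 1..m. 2 powi (int m - int i) * x i,
                     \<Sum>i = m + 1..n. 2 powi (int m - int i) * x i]))"
  using part1[OF assms(2)] part2[OF assms(2)] by blast

end
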